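(* Let $E$ be a Banach lattice with an order continuous norm, let $A$ be an ideal in $E$, and let $\mathfrak{B}$ be the Boolean subalgebra of $\mathfrak{B}(E)$ generated by the order projections $\pi_x$, $x\in A$, where $\pi_x(z)=\sup\{z\wedge n|x|:n\in\mathbb{N}\}$. Suppose $T$ is $\mathfrak{B}$-Volterra, $0\le x_3\le x_2\le x_1$ in $A$, and $\{\pi_{x_1},\sigma,\rho\}$ is an antichain in $\mathfrak{B}$. Then $(\pi_{x_1}-\pi_{x_2})T\sigma x\perp(\pi_{x_2}-\pi_{x_3})T(\rho^*\sigma x+w)$ for every $x\in E$ and $w\in\pi_{x_1}^*(E)$. In particular, $(\pi_{x_1}-\pi_{x_2})T\sigma x\perp\pi_{x_2}T\rho^*\sigma x$ for every $x\in E$.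
   Context: $\mathfrak{B}(E)$ is the Boolean algebra of all order projections on $E$ ($\pi\le\rho$ iff $\pi\rho=\pi$, $\pi\wedge\rho=\pi\rho$, $\pi^*=I_E-\pi$, zero $\mathbf 0$, unit $\mathbf 1=I_E$). A positive operator $T$ is $\mathfrak{B}$-Volterra if for all $\pi\in\mathfrak{B}$ and $x,y\in E$, $\pi x=\pi y$ implies $\pi Tx=\pi Ty$. For $x\in E$, $\pi_x$ is the order projection onto the band generated by $x$, given on $z\in E^+$ by $\pi_x(z)=\sup\{z\wedge n|x|:n\in\mathbb{N}\}$. A nonempty subset of $\mathfrak{B}$ is an antichain if any two distinct elements have meet $\mathbf 0$. $u\perp v$ means $|u|\wedge|v|=0$. *)

theory Defs
  imports Complex_Main
begin

definition lmod :: "'a::{lattice,uminus} \<Rightarrow> 'a" where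
  "lmod x = sup x (- x)"

definition ppart :: "'a::{lattice,zero} \<Rightarrow> 'a" where
  "ppart x = sup x 0"

definition npart :: "'a::{lattice,zero,uminus} \<Rightarrow> 'a" where
  "npart x = sup (- x) 0"

class banach_lattice = banach + ordered_real_vector + lattice +
  assumes lattice_norm: "sup x (- x) \<le> sup y (- y) \<Longrightarrow> norm x \<le> norm y"

definition is_lub :: "'a::order set \<Rightarrow> 'a \<Rightarrow> bool" where
  "is_lub S s \<longleftrightarrow> (\<forall>y\<in>S. y \<le> s) \<and> (\<forall>u. (\<forall>y\<in>S. y \<le> u) \<longrightarrow> s \<le> u)"

definition is_glb :: "'a::order set \<Rightarrow> 'a \<Rightarrow> bool" where
  "is_glb S s \<longleftrightarrow> (\<forall>y\<in>S. s \<le> y) \<and> (\<forall>u. (\<forall>y\<in>S. u \<le> y) \<longrightarrow> u \<le> s)"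

definition lsup :: "'a::order set \<Rightarrow> 'a" where
  "lsup S = (THE s. is_lub S s)"

text \<open>Order continuous norm: whenever a (nonempty) downward directed set
  decreases to 0 (i.e. x_alpha decreasing to 0), the norms tend to 0.\<close>
class oc_banach_lattice = banach_lattice +
  assumes order_continuous_norm:
    "\<lbrakk> D \<noteq> {}; \<forall>a\<in>D. \<forall>b\<in>D. \<exists>c\<in>D. c \<le> a \<and> c \<le> b; \<forall>y\<in>D. 0 \<le> y; \<forall>u. (\<forall>y\<in>D. u \<le> y) \<longrightarrow> u \<le> 0; e > 0 \<rbrakk>
       \<Longrightarrow> \<exists>d\<in>D. norm d < e"

definition lattice_ideal :: "'a::banach_lattice set \<Rightarrow> bool" where
  "lattice_ideal A \<longleftrightarrow> 0 \<in> A \<and> (\<forall>x\<in>A. \<forall>y\<in>A. x + y \<in> A) \<and>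
     (\<forall>c. \<forall>x\<in>A. c *\<^sub>R x \<in> A) \<and> (\<forall>x\<in>A. \<forall>y. lmod y \<le> lmod x \<longrightarrow> y \<in> A)"

definition positive_op :: "('a::banach_lattice \<Rightarrow> 'a) \<Rightarrow> bool" where
  "positive_op T \<longleftrightarrow> linear T \<and> (\<forall>x. 0 \<le> x \<longrightarrow> 0 \<le> T x)"

definition order_projection :: "('a::banach_lattice \<Rightarrow> 'a) \<Rightarrow> bool" where
  "order_projection P \<longleftrightarrow> linear P \<and> P \<circ> P = P \<and> (\<forall>x. 0 \<le> x \<longrightarrow> 0 \<le> P x \<and> P x \<le> x)"

definition pcompl :: "('a::banach_lattice \<Rightarrow> 'a) \<Rightarrow> 'a \<Rightarrow> 'a" where
  "pcompl P = (\<lambda>z. z - P z)"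

definition pzero :: "'a::banach_lattice \<Rightarrow> 'a" where
  "pzero = (\<lambda>z. 0)"

text \<open>The band projection pi_x: on positive z it is sup{z \<and> n|x|}; extended
  linearly via z = ppart z - npart z.\<close>
definition bproj :: "'a::banach_lattice \<Rightarrow> 'a \<Rightarrow> 'a" where
  "bproj x z = lsup {inf (ppart z) (real n *\<^sub>R lmod x) | n. True}
             - lsup {inf (npart z) (real n *\<^sub>R lmod x) | n. True}"

inductive_set gen_balg :: "('a::banach_lattice \<Rightarrow> 'a) set \<Rightarrow> ('a \<Rightarrow> 'a) set"
  for G :: "('a \<Rightarrow> 'a) set" where
  gen: "P \<in> G \<Longrightarrow> P \<in> gen_balg G"
| zero: "pzero \<in> gen_balg G"
| one: "id \<in> gen_balg G"
| meet: "P \<in> gen_balg G \<Longrightarrow> Q \<in> gen_balg G \<Longrightarrow> P \<circ> Q \<in> gen_balg G"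
| compl: "P \<in> gen_balg G \<Longrightarrow> pcompl P \<in> gen_balg G"

definition volterra :: "('a::banach_lattice \<Rightarrow> 'a) set \<Rightarrow> ('a \<Rightarrow> 'a) \<Rightarrow> bool" where
  "volterra B T \<longleftrightarrow> positive_op T \<and>
     (\<forall>P\<in>B. \<forall>x y. P x = P y \<longrightarrow> P (T x) = P (T y))"

definition antichain :: "('a::banach_lattice \<Rightarrow> 'a) set \<Rightarrow> ('a \<Rightarrow> 'a) set \<Rightarrow> bool" where
  "antichain B S \<longleftrightarrow> S \<noteq> {} \<and> S \<subseteq> B \<and> (\<forall>P\<in>S. \<forall>Q\<in>S. P \<noteq> Q \<longrightarrow> P \<circ> Q = pzero)"

definition disj :: "'a::banach_lattice \<Rightarrow> 'a \<Rightarrow> bool" (infix "\<bottom>\<^sub>L" 50) where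
  "u \<bottom>\<^sub>L v \<longleftrightarrow> inf (lmod u) (lmod v) = 0"

end

theory Submission
  imports Defs "HOL-Library.Lattice_Algebras"
begin
subclass (in banach_lattice) lattice_ab_group_add ..

lemma lmod_pos: "0 \<le> (x::'a::banach_lattice) \<Longrightarrow> lmod x = x"
  unfolding lmod_def by (simp add: sup_absorb1 order_trans[of "-x" 0 x])

lemma lmod_nonneg: "0 \<le> lmod (x::'a::banach_lattice)"
proof -
  have "x + - x \<le> lmod x + lmod x" unfolding lmod_def by (intro add_mono) auto
  then show ?thesis by simp
qed

lemma norm_lmod: "norm (lmod (x::'a::banach_lattice)) = norm x"
proof -
  have l: "lmod (lmod x) = lmod x" using lmod_pos lmod_nonneg by blast
  show ?thesis using lattice_norm[of "lmod x" x] lattice_norm[of x "lmod x"] l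
    unfolding lmod_def by fastforce
qed

lemma norm_mono_pos: "0 \<le> (a::'a::banach_lattice) \<Longrightarrow> a \<le> b \<Longrightarrow> norm a \<le> norm b"
  using lattice_norm[of a b] lmod_pos[of a] lmod_pos[of b] unfolding lmod_def by force

lemma arch_zero:
  fixes w c :: "'a::banach_lattice"
  assumes "0 \<le> w" "\<And>k::nat. real k *\<^sub>R w \<le> c"
  shows "w = 0"
proof (rule ccontr)
  assume "w \<noteq> 0"
  then have "0 < norm w" by simp
  then obtain k::nat where k: "norm c < real k * norm w" using ex_less_of_nat_mult by blast
  have "0 \<le> real k *\<^sub>R w" using assms(1) by (simp add: scaleR_nonneg_nonneg)
  then have "norm (real k *\<^sub>R w) \<le> norm c" using norm_mono_pos assms(2) by blast
  then show False using k by simp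
qed

lemma closed_cone:
  fixes f :: "nat \<Rightarrow> 'a::banach_lattice"
  assumes lim: "f \<longlonglongrightarrow> L" and pos: "\<And>m. m \<ge> N \<Longrightarrow> 0 \<le> f m"
  shows "0 \<le> L"
proof -
  define n where "n = sup (- L) 0"
  have n0: "0 \<le> n" unfolding n_def by simp
  have bd: "norm n \<le> norm (f m - L)" if "m \<ge> N" for m
  proof -
    have "- L \<le> f m - L" using pos[OF that] by simp
    then have "n \<le> sup (f m - L) 0" unfolding n_def using sup_mono by blast
    also have "\<dots> \<le> lmod (f m - L)" unfolding lmod_def using lmod_nonneg[of "f m - L"]
      unfolding lmod_def by simp
    finally have "norm n \<le> norm (lmod (f m - L))" using norm_mono_pos n0 by blast
    then show ?thesis using norm_lmod by metis
  qed
  have "norm n = 0"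
  proof (rule ccontr)
    assume "norm n \<noteq> 0"
    then have "norm n > 0" by simp
    with lim obtain M where M: "\<And>m. m \<ge> M \<Longrightarrow> norm (f m - L) < norm n"
      unfolding LIMSEQ_iff by blast
    show False using M[of "max M N"] bd[of "max M N"] by simp
  qed
  then have "n = 0" by simp
  then have "- L \<le> 0" unfolding n_def by (metis sup.cobounded1)
  then show ?thesis by simp
qed

lemma sigma_complete:
  fixes u :: "nat \<Rightarrow> 'a::oc_banach_lattice"
  assumes mono: "\<And>n. u n \<le> u (Suc n)" and bd: "\<And>n. u n \<le> v0"
  shows "\<exists>s. is_lub (range u) s"
proof -
  have monole: "u m \<le> u n" if "m \<le> n" for m n using lift_Suc_mono_le[of u, OF mono that] .
  define D where "D = {v - u n | v n. \<forall>m. u m \<le> v}"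
  have small: "\<exists>v n. (\<forall>m. u m \<le> v) \<and> norm (v - u n) < e" if "e > 0" for e
  proof -
    have h1: "D \<noteq> {}" unfolding D_def using bd by blast
    have h2: "\<forall>a\<in>D. \<forall>b\<in>D. \<exists>c\<in>D. c \<le> a \<and> c \<le> b"
    proof (intro ballI)
      fix a b assume "a \<in> D" "b \<in> D"
      then obtain v n v' n' where a: "a = v - u n" "\<forall>m. u m \<le> v" and b: "b = v' - u n'" "\<forall>m. u m \<le> v'"
        unfolding D_def by blast
      let ?c = "inf v v' - u (max n n')"
      have "?c \<in> D" unfolding D_def using a b by auto
      moreover have "?c \<le> a" using a monole[of n "max n n'"]
        by (metis diff_mono inf.cobounded1 max.cobounded1)
      moreover have "?c \<le> b" using b monole[of n' "max n n'"]
        by (metis diff_mono inf.cobounded2 max.cobounded2)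
      ultimately show "\<exists>c\<in>D. c \<le> a \<and> c \<le> b" by blast
    qed
    have h3: "\<forall>y\<in>D. 0 \<le> y" unfolding D_def by auto
    have h4: "\<forall>w. (\<forall>y\<in>D. w \<le> y) \<longrightarrow> w \<le> 0"
    proof (intro allI impI)
      fix w assume w: "\<forall>y\<in>D. w \<le> y"
      define w' where "w' = sup w 0"
      have w': "w' \<le> v - u n" if "\<forall>m. u m \<le> v" for v n
      proof -
        have "v - u n \<in> D" unfolding D_def using that by blast
        then show ?thesis unfolding w'_def using w that by simp
      qed
      have ind: "\<forall>v. (\<forall>m. u m \<le> v) \<longrightarrow> (\<forall>m. u m \<le> v - real k *\<^sub>R w')" for k
      proof (induction k)
        case 0 then show ?case by simp
      next
        case (Suc k)
        show ?case
        proof (intro allI impI)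
          fix v m assume v: "\<forall>m. u m \<le> v"
          have "w' \<le> (v - real k *\<^sub>R w') - u m" using w' Suc v by blast
          then show "u m \<le> v - real (Suc k) *\<^sub>R w'" by (simp add: algebra_simps)
        qed
      qed
      have "\<And>k::nat. real k *\<^sub>R w' \<le> v0 - u 0"
        using ind bd by (metis le_diff_eq add.commute)
      then have "w' = 0" by (rule arch_zero[rotated]) (simp add: w'_def)
      then show "w \<le> 0" unfolding w'_def by (metis sup.cobounded1)
    qed
    obtain d where "d \<in> D" "norm d < e"
      using order_continuous_norm[OF h1 h2 h3 h4 \<open>e > 0\<close>] by blast
    then show ?thesis unfolding D_def by blast
  qed
  have "Cauchy u"
    unfolding Cauchy_def
  proof (intro allI impI)
    fix e :: real assume "e > 0"
    then obtain v n where v: "\<forall>m. u m \<le> v" and nv: "norm (v - u n) < e/2"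
      using small[of "e/2"] by auto
    have c: "norm (u m - u n) < e/2" if "m \<ge> n" for m
    proof -
      have "0 \<le> u m - u n" using monole[OF that] by simp
      moreover have "u m - u n \<le> v - u n" using v by (simp add: diff_right_mono)
      ultimately show ?thesis using norm_mono_pos nv by (meson order.strict_trans1)
    qed
    show "\<exists>M. \<forall>m\<ge>M. \<forall>n'\<ge>M. dist (u m) (u n') < e"
    proof (intro exI allI impI)
      fix m n' assume "n \<le> m" "n \<le> n'"
      then have "norm (u m - u n) + norm (u n' - u n) < e" using c[of m] c[of n'] by linarith
      moreover have "norm (u m - u n') \<le> norm (u m - u n) + norm (u n' - u n)"
        using norm_triangle_ineq4[of "u m - u n" "u n' - u n"] by simp
      ultimately show "dist (u m) (u n') < e" by (simp add: dist_norm)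
    qed
  qed
  then obtain L where L: "u \<longlonglongrightarrow> L" using Cauchy_convergent_iff convergent_def by blast
  have "is_lub (range u) L"
    unfolding is_lub_def
  proof (intro conjI allI impI ballI)
    fix y assume "y \<in> range u"
    then obtain n where y: "y = u n" by auto
    have "(\<lambda>m. u m - u n) \<longlonglongrightarrow> L - u n" using L by (intro tendsto_intros)
    then have "0 \<le> L - u n" by (rule closed_cone) (use monole in simp)
    then show "y \<le> L" using y by simp
  next
    fix v assume v: "\<forall>y\<in>range u. y \<le> v"
    have "(\<lambda>m. v - u m) \<longlonglongrightarrow> v - L" using L by (intro tendsto_intros)
    then have "0 \<le> v - L" by (rule closed_cone[where N=0]) (use v in simp)
    then show "L \<le> v" by simp
  qed
  then show ?thesis by blast
qed

definition PP :: "'a::banach_lattice \<Rightarrow> 'a \<Rightarrow> 'a" where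
  "PP x z = lsup {inf z (real n *\<^sub>R x) | n. True}"

lemma bproj_PP: "bproj x z = PP (lmod x) (ppart z) - PP (lmod x) (npart z)"
  unfolding bproj_def PP_def ..

lemma lsup_eq: "is_lub S s \<Longrightarrow> lsup S = s"
  unfolding lsup_def
  by (rule the_equality) (auto simp: is_lub_def intro: order.antisym)

lemma PP_lub:
  fixes x z :: "'a::oc_banach_lattice"
  assumes "0 \<le> x" "0 \<le> z"
  shows "is_lub {inf z (real n *\<^sub>R x) | n. True} (PP x z)"
proof -
  have eq: "{inf z (real n *\<^sub>R x) | n. True} = range (\<lambda>n. inf z (real n *\<^sub>R x))" by auto
  have "\<exists>s. is_lub (range (\<lambda>n. inf z (real n *\<^sub>R x))) s"
  proof (rule sigma_complete)
    fix n
    have "real n *\<^sub>R x \<le> real (Suc n) *\<^sub>R x" using assms(1) by (intro scaleR_right_mono) auto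
    then show "inf z (real n *\<^sub>R x) \<le> inf z (real (Suc n) *\<^sub>R x)" by (rule inf_mono[OF order.refl])
  next
    fix n show "inf z (real n *\<^sub>R x) \<le> z" by simp
  qed
  then show ?thesis unfolding PP_def eq using lsup_eq by metis
qed

context
  fixes x z :: "'a::oc_banach_lattice"
  assumes x0: "0 \<le> x" and z0: "0 \<le> z"
begin

lemma PP_ge: "inf z (real n *\<^sub>R x) \<le> PP x z"
  using PP_lub[OF x0 z0] unfolding is_lub_def by blast

lemma PP_least: "(\<And>n. inf z (real n *\<^sub>R x) \<le> v) \<Longrightarrow> PP x z \<le> v"
  using PP_lub[OF x0 z0] unfolding is_lub_def by blast

lemma PP_le: "PP x z \<le> z"
  by (rule PP_least) simp

lemma PP_nonneg: "0 \<le> PP x z"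
  using PP_ge[of 0] z0 by (simp add: inf_absorb2)

lemma PP_compl_disj: "inf (z - PP x z) x = 0"
proof -
  define w where "w = inf (z - PP x z) x"
  have w0: "0 \<le> w" unfolding w_def using PP_le x0 by simp
  have "inf z (real n *\<^sub>R x) \<le> PP x z - w" for n
  proof -
    have "w + inf z (real n *\<^sub>R x) \<le> (z - PP x z) + PP x z"
      by (intro add_mono) (simp_all add: w_def PP_ge)
    moreover have "w + inf z (real n *\<^sub>R x) \<le> x + real n *\<^sub>R x"
      by (intro add_mono) (simp_all add: w_def)
    ultimately have "w + inf z (real n *\<^sub>R x) \<le> inf z (real (Suc n) *\<^sub>R x)"
      by (simp add: algebra_simps)
    also have "\<dots> \<le> PP x z" by (rule PP_ge)
    finally show ?thesis by (simp add: algebra_simps)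
  qed
  then have "PP x z \<le> PP x z - w" by (rule PP_least)
  then have "w \<le> 0" by simp
  then have "w = 0" using w0 by (rule order.antisym)
  then show ?thesis unfolding w_def .
qed

end

lemma PP_mono_x:
  fixes x x' z :: "'a::oc_banach_lattice"
  assumes "0 \<le> x" "x \<le> x'" "0 \<le> z"
  shows "PP x z \<le> PP x' z"
proof (rule PP_least[OF assms(1,3)])
  fix n
  have "real n *\<^sub>R x \<le> real n *\<^sub>R x'" using assms by (intro scaleR_left_mono) auto
  then have "inf z (real n *\<^sub>R x) \<le> inf z (real n *\<^sub>R x')" by (rule inf_mono[OF order.refl])
  also have "\<dots> \<le> PP x' z" using assms by (intro PP_ge) auto
  finally show "inf z (real n *\<^sub>R x) \<le> PP x' z" .
qed

lemma inf_add_le: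
  fixes p q x :: "'a::banach_lattice"
  assumes "0 \<le> p" "0 \<le> q" "0 \<le> x"
  shows "inf (p + q) x \<le> inf p x + inf q x"
proof -
  define r where "r = inf (p + q) x"
  have "r - p \<le> q" unfolding r_def by (simp add: le_infI1 algebra_simps)
  moreover have "r - p \<le> x" unfolding r_def using assms(1)
    by (metis diff_le_eq inf.cobounded2 le_add_same_cancel1 order_trans add.commute)
  ultimately have "r - p \<le> inf q x" by simp
  then have "r \<le> p + inf q x" by (metis add.commute diff_le_eq)
  moreover have "r \<le> x + inf q x" unfolding r_def using assms by (simp add: le_infI2)
  ultimately have "r \<le> inf (p + inf q x) (x + inf q x)" by simp
  also have "\<dots> = inf p x + inf q x" by (simp add: add_inf_distrib_right)
  finally show ?thesis unfolding r_def .
qed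

lemma disj_sum:
  fixes p q x :: "'a::banach_lattice"
  assumes "0 \<le> p" "0 \<le> q" "0 \<le> x" "inf p x = 0" "inf q x = 0"
  shows "inf (p + q) x = 0"
  using inf_add_le[OF assms(1-3)] assms by (simp add: order.antisym)

lemma disj_mult:
  fixes D x :: "'a::banach_lattice"
  assumes "0 \<le> D" "0 \<le> x" "inf D x = 0"
  shows "inf D (real n *\<^sub>R x) = 0"
proof (induction n)
  case 0 then show ?case using assms by (simp add: inf_absorb2)
next
  case (Suc n)
  have "inf (real n *\<^sub>R x + x) D = 0"
    using disj_sum[of "real n *\<^sub>R x" x D] Suc assms by (simp add: inf_commute scaleR_nonneg_nonneg)
  then show ?case by (simp add: inf_commute algebra_simps)
qed

lemma disj_PP:
  fixes D x y :: "'a::oc_banach_lattice"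
  assumes D0: "0 \<le> D" and x0: "0 \<le> x" and y0: "0 \<le> y" and d: "inf D x = 0"
  shows "inf D (PP x y) = 0"
proof -
  define w where "w = inf D (PP x y)"
  have w0: "0 \<le> w" unfolding w_def using D0 PP_nonneg[OF x0 y0] by simp
  have "inf y (real n *\<^sub>R x) \<le> PP x y - w" for n
  proof -
    let ?s = "inf y (real n *\<^sub>R x)"
    have s0: "0 \<le> ?s" using x0 y0 by (simp add: scaleR_nonneg_nonneg)
    have "inf ?s w \<le> inf (real n *\<^sub>R x) D" unfolding w_def by (intro inf_mono) auto
    also have "\<dots> = 0" using disj_mult[OF D0 x0 d, of n] by (simp add: inf_commute)
    finally have sw: "inf ?s w = 0" using s0 w0 by (simp add: order.antisym)
    have "?s + w = sup ?s w + inf ?s w" by (rule add_eq_inf_sup)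
    also have "\<dots> = sup ?s w" using sw by simp
    also have "\<dots> \<le> PP x y" using PP_ge[OF x0 y0] unfolding w_def by simp
    finally show ?thesis by (simp add: algebra_simps)
  qed
  then have "PP x y \<le> PP x y - w" by (rule PP_least[OF x0 y0])
  then have "w \<le> 0" by simp
  then have "w = 0" using w0 by (rule order.antisym)
  then show ?thesis unfolding w_def .
qed

lemma lmod_diff_le:
  fixes p q :: "'a::banach_lattice"
  assumes "0 \<le> p" "0 \<le> q"
  shows "lmod (p - q) \<le> p + q"
  unfolding lmod_def using assms
  by (intro sup_least) (simp_all add: algebra_simps add_increasing add_increasing2)

lemma disj_crit:
  fixes a b p q :: "'a::banach_lattice"
  assumes "lmod a \<le> p" "lmod b \<le> q" "inf p q = 0"
  shows "a \<bottom>\<^sub>L b"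
proof -
  have "inf (lmod a) (lmod b) \<le> 0" using assms inf_mono by metis
  then show ?thesis unfolding disj_def using lmod_nonneg[of a] lmod_nonneg[of b]
    by (simp add: order.antisym)
qed

lemma ppart_nonneg: "0 \<le> ppart (z::'a::banach_lattice)" unfolding ppart_def by simp
lemma npart_nonneg: "0 \<le> npart (z::'a::banach_lattice)" unfolding npart_def by simp

lemma key:
  fixes x1 x2 x3 u v :: "'a::oc_banach_lattice"
  assumes h3: "0 \<le> x3" and h32: "x3 \<le> x2" and h21: "x2 \<le> x1"
  shows "(bproj x1 u - bproj x2 u) \<bottom>\<^sub>L (bproj x2 v - bproj x3 v)"
    and "(bproj x1 u - bproj x2 u) \<bottom>\<^sub>L bproj x2 v"
proof -
  have h2: "0 \<le> x2" using h3 h32 by simp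
  have h1: "0 \<le> x1" using h2 h21 by simp
  have l1: "lmod x1 = x1" and l2: "lmod x2 = x2" and l3: "lmod x3 = x3"
    using lmod_pos h1 h2 h3 by auto
  define p where "p = ppart u"
  define q where "q = npart u"
  define p' where "p' = ppart v"
  define q' where "q' = npart v"
  have p0: "0 \<le> p" and q0: "0 \<le> q" and p'0: "0 \<le> p'" and q'0: "0 \<le> q'"
    unfolding p_def q_def p'_def q'_def by (simp_all add: ppart_nonneg npart_nonneg)
  have dpos: "0 \<le> PP x1 z - PP x2 z" if "0 \<le> z" for z
    using PP_mono_x[OF h2 h21 that] by simp
  have ddisj: "inf (PP x1 z - PP x2 z) x2 = 0" if z0: "0 \<le> z" for z
  proof -
    have "PP x1 z - PP x2 z \<le> z - PP x2 z" using PP_le[OF h1 z0] by simp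
    then have "inf (PP x1 z - PP x2 z) x2 \<le> inf (z - PP x2 z) x2" by (rule inf_mono) simp
    also have "\<dots> = 0" by (rule PP_compl_disj[OF h2 z0])
    finally show ?thesis using dpos[OF z0] h2 by (simp add: order.antisym)
  qed
  define D where "D = (PP x1 p - PP x2 p) + (PP x1 q - PP x2 q)"
  have D0: "0 \<le> D" unfolding D_def using dpos[OF p0] dpos[OF q0] by (rule add_nonneg_nonneg)
  have Dx: "inf D x2 = 0" unfolding D_def
    by (rule disj_sum[OF dpos[OF p0] dpos[OF q0] h2 ddisj[OF p0] ddisj[OF q0]])
  have a: "lmod (bproj x1 u - bproj x2 u) \<le> D"
  proof -
    have "bproj x1 u - bproj x2 u = (PP x1 p - PP x2 p) - (PP x1 q - PP x2 q)"
      unfolding bproj_PP l1 l2 p_def q_def by (simp add: algebra_simps)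
    then show ?thesis unfolding D_def using lmod_diff_le dpos p0 q0 by metis
  qed
  define Q where "Q = PP x2 p' + PP x2 q'"
  have DQ: "inf D Q = 0"
  proof -
    have "inf (PP x2 p' + PP x2 q') D = 0"
      by (rule disj_sum) (simp_all add: PP_nonneg h2 p'0 q'0 D0 inf_commute disj_PP[OF D0 h2 _ Dx])
    then show ?thesis unfolding Q_def by (simp add: inf_commute)
  qed
  have b1: "lmod (bproj x2 v - bproj x3 v) \<le> Q"
  proof -
    have e: "bproj x2 v - bproj x3 v = (PP x2 p' - PP x3 p') - (PP x2 q' - PP x3 q')"
      unfolding bproj_PP l3 l2 p'_def q'_def by (simp add: algebra_simps)
    have "lmod ((PP x2 p' - PP x3 p') - (PP x2 q' - PP x3 q'))
       \<le> (PP x2 p' - PP x3 p') + (PP x2 q' - PP x3 q')"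
      by (rule lmod_diff_le) (use PP_mono_x[OF h3 h32 p'0] PP_mono_x[OF h3 h32 q'0] in simp_all)
    also have "\<dots> \<le> Q" unfolding Q_def using PP_nonneg[OF h3 p'0] PP_nonneg[OF h3 q'0]
      by (simp add: algebra_simps add_increasing)
    finally show ?thesis using e by simp
  qed
  have b2: "lmod (bproj x2 v) \<le> Q"
    unfolding bproj_PP l2 Q_def p'_def[symmetric] q'_def[symmetric]
    using lmod_diff_le PP_nonneg[OF h2 p'0] PP_nonneg[OF h2 q'0] by blast
  show "(bproj x1 u - bproj x2 u) \<bottom>\<^sub>L (bproj x2 v - bproj x3 v)"
    using disj_crit[OF a b1 DQ] .
  show "(bproj x1 u - bproj x2 u) \<bottom>\<^sub>L bproj x2 v"
    using disj_crit[OF a b2 DQ] .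
qed

theorem proposition3p12:
  fixes A :: "'a::oc_banach_lattice set"
    and T \<sigma> \<rho> :: "'a \<Rightarrow> 'a"
    and x1 x2 x3 :: 'a
  defines "B \<equiv> gen_balg (bproj ` A)"
  assumes "lattice_ideal A"
    and "volterra B T"
    and "x1 \<in> A" and "x2 \<in> A" and "x3 \<in> A"
    and "0 \<le> x3" and "x3 \<le> x2" and "x2 \<le> x1"
    and "antichain B {bproj x1, \<sigma>, \<rho>}"
  shows "(\<forall>x w. w \<in> range (pcompl (bproj x1)) \<longrightarrow>
           (bproj x1 (T (\<sigma> x)) - bproj x2 (T (\<sigma> x)))
             \<bottom>\<^sub>L (bproj x2 (T (pcompl \<rho> (\<sigma> x) + w)) - bproj x3 (T (pcompl \<rho> (\<sigma> x) + w))))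
       \<and> (\<forall>x. (bproj x1 (T (\<sigma> x)) - bproj x2 (T (\<sigma> x))) \<bottom>\<^sub>L bproj x2 (T (pcompl \<rho> (\<sigma> x))))"
  using key[OF assms(7,8,9)] by blast

end
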